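(* Let $D$ be a domain in $\mathbb{R}^2$ and let $u$ be panharmonic in $D$, i.e. $u$ is a real-valued $C^2(D)$ solution of $\nabla^2 u - \mu^2 u = 0$ for some $\mu \in \mathbb{R}\setminus\{0\}$. Then $$a(\mu r)\,u(x) = \frac{1}{\pi r^2}\int_{B_r(x)} u(y)\,\log\frac{r}{|x-y|}\,\mathrm{d}y, \qquad a(t) = \frac{2\,[I_0(t)-1]}{t^2},$$ for every $x \in D$ and every $r>0$ with $\overline{B_r(x)} \subset D$.
   Context: $B_r(x) = \{y : |y-x| < r\}$ is the open disc; $I_0$ is the modified Bessel function of order $0$. *)

theory Defs
  imports "HOL-Analysis.Analysis"
begin

definition bessel_I0 :: "real \<Rightarrow> real" where
  "bessel_I0 t = (\<Sum>k. (t / 2) ^ (2 * k) / (fact k)\<^sup>2)"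

definition a_fun :: "real \<Rightarrow> real" where
  "a_fun t = 2 * (bessel_I0 t - 1) / t\<^sup>2"

definition partial :: "2 \<Rightarrow> (real^2 \<Rightarrow> real) \<Rightarrow> real^2 \<Rightarrow> real" where
  "partial i f x = deriv (\<lambda>t. f (x + t *\<^sub>R axis i 1)) 0"

definition has_partial_on :: "2 \<Rightarrow> (real^2 \<Rightarrow> real) \<Rightarrow> (real^2) set \<Rightarrow> bool" where
  "has_partial_on i f D \<longleftrightarrow> (\<forall>x\<in>D. (\<lambda>t. f (x + t *\<^sub>R axis i 1)) differentiable (at 0))"

definition C2_on :: "(real^2) set \<Rightarrow> (real^2 \<Rightarrow> real) \<Rightarrow> bool" where
  "C2_on D u \<longleftrightarrow> continuous_on D u \<and>
     (\<forall>i. has_partial_on i u D \<and> continuous_on D (partial i u)) \<and>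
     (\<forall>i j. has_partial_on j (partial i u) D \<and> continuous_on D (partial j (partial i u)))"

definition laplacian :: "(real^2 \<Rightarrow> real) \<Rightarrow> real^2 \<Rightarrow> real" where
  "laplacian u x = (\<Sum>i\<in>UNIV. partial i (partial i u) x)"

definition panharmonic :: "real \<Rightarrow> (real^2) set \<Rightarrow> (real^2 \<Rightarrow> real) \<Rightarrow> bool" where
  "panharmonic \<mu> D u \<longleftrightarrow> C2_on D u \<and> (\<forall>x\<in>D. laplacian u x - \<mu>\<^sup>2 * u x = 0)"

end

theory Submission
  imports Defs "HOL-Real_Asymp.Real_Asymp"
begin

lemma norm2: "norm (v::real^2) = sqrt ((v$1)^2 + (v$2)^2)"
  by (simp add: norm_vec_def L2_set_def sum_2)
lemma bl: "bounded_linear (\<lambda>h::real^2. a * h$1 + b * h$2)"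
  by (intro bounded_linear_add bounded_linear_compose[OF bounded_linear_mult_right] bounded_linear_vec_nth)
lemma dec2: "(h::real^2) = h$1 *\<^sub>R axis 1 1 + h$2 *\<^sub>R axis 2 1"
  by (simp add: vec_eq_iff forall_2 axis_def)

lemma partial_at_shift:
  assumes "has_partial_on i f D" "z + s *\<^sub>R axis i 1 \<in> D"
  shows "((\<lambda>t. f (z + t *\<^sub>R axis i 1)) has_real_derivative partial i f (z + s *\<^sub>R axis i 1)) (at s)"
proof -
  let ?w = "z + s *\<^sub>R axis i 1"
  have "(\<lambda>t. f (?w + t *\<^sub>R axis i 1)) differentiable (at 0)"
    using assms unfolding has_partial_on_def by blast
  then have "((\<lambda>t. f (?w + t *\<^sub>R axis i 1)) has_real_derivative partial i f ?w) (at 0)"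
    unfolding partial_def using DERIV_deriv_iff_real_differentiable by blast
  then have "((\<lambda>t. f (z + (t + s) *\<^sub>R axis i 1)) has_real_derivative partial i f ?w) (at 0)"
    by (simp add: algebra_simps scaleR_add_left)
  then show ?thesis using DERIV_shift[of "\<lambda>t. f (z + t *\<^sub>R axis i 1)" "partial i f ?w" 0 s]
    by simp
qed

lemma frechet2:
  fixes f :: "real^2 \<Rightarrow> real"
  assumes D: "open D" and hp: "\<And>i. has_partial_on i f D" and cp: "\<And>i. continuous_on D (partial i f)"
    and y: "y \<in> D"
  shows "(f has_derivative (\<lambda>h. partial 1 f y * h$1 + partial 2 f y * h$2)) (at y)"
  unfolding has_derivative_at_alt
proof (intro conjI bl allI impI)
  fix e :: real assume e: "e > 0"
  define a1 :: "real^2" where "a1 = axis 1 1"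
  define a2 :: "real^2" where "a2 = axis 2 1"
  obtain d0 where d0: "d0 > 0" "ball y d0 \<subseteq> D" using D y open_contains_ball by blast
  obtain d1 where d1: "d1 > 0" "\<And>z. z \<in> D \<Longrightarrow> dist z y < d1 \<Longrightarrow> dist (partial 2 f z) (partial 2 f y) < e/2"
    using cp[of 2] y e unfolding continuous_on_iff by (meson half_gt_zero)
  have F1: "((\<lambda>t. f (y + t *\<^sub>R a1)) has_real_derivative partial 1 f y) (at 0)"
    using partial_at_shift[OF hp[of 1], of y 0] y by (simp add: a1_def)
  then obtain d2 where d2: "d2 > 0" "\<And>t. norm (t - 0) < d2 \<Longrightarrow>
      norm (f (y + t *\<^sub>R a1) - f (y + 0 *\<^sub>R a1) - partial 1 f y * (t - 0)) \<le> e/2 * norm (t - 0)"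
    unfolding has_field_derivative_def has_derivative_at_alt using e by (meson half_gt_zero)
  define d where "d = min d0 (min d1 d2)"
  show "\<exists>d>0. \<forall>z. norm (z - y) < d \<longrightarrow>
          norm (f z - f y - (partial 1 f y * (z - y) $ 1 + partial 2 f y * (z - y) $ 2)) \<le> e * norm (z - y)"
  proof (intro exI[of _ d] conjI allI impI)
    show "d > 0" using d0 d1 d2 by (simp add: d_def)
    fix z assume hz: "norm (z - y) < d"
    define h where "h = z - y"
    define h1 where "h1 = h$1"
    define h2 where "h2 = h$2"
    have h1le: "\<bar>h1\<bar> \<le> norm h" unfolding h1_def norm2 by (rule real_le_rsqrt) simp
    have h2le: "\<bar>h2\<bar> \<le> norm h" unfolding h2_def norm2 by (rule real_le_rsqrt) simp
    have hd: "norm h < d" using hz h_def by simp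
    define w where "w = y + h1 *\<^sub>R a1"
    have zw: "z = w + h2 *\<^sub>R a2" using dec2[of h] by (simp add: w_def h_def h1_def h2_def a1_def a2_def algebra_simps)
    have B: "\<bar>f w - f y - partial 1 f y * h1\<bar> \<le> e/2 * \<bar>h1\<bar>"
      using d2(2)[of h1] h1le hd by (simp add: w_def d_def)
    define S where "S = closed_segment 0 h2"
    have tS: "\<bar>t\<bar> \<le> \<bar>h2\<bar>" if "t \<in> S" for t
      using that by (auto simp: S_def closed_segment_eq_real_ivl split: if_splits)
    have inball: "norm (w + t *\<^sub>R a2 - y) < d" if "t \<in> S" for t
    proof -
      have "norm (w + t *\<^sub>R a2 - y) = sqrt (h1^2 + t^2)"
        by (simp add: norm2 w_def a1_def a2_def axis_def)
      also have "\<dots> \<le> sqrt (h1^2 + h2^2)"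
        using tS[OF that] by (simp add: abs_le_square_iff)
      also have "\<dots> = norm h" by (simp add: norm2 h1_def h2_def)
      finally show ?thesis using hd by simp
    qed
    have der: "((\<lambda>t. f (w + t *\<^sub>R a2) - partial 2 f y * t) has_real_derivative
                 (partial 2 f (w + t *\<^sub>R a2) - partial 2 f y)) (at t within S)" if "t \<in> S" for t
    proof -
      have "w + t *\<^sub>R a2 \<in> D" using inball[OF that] d0 by (auto simp: d_def dist_norm norm_minus_commute)
      then have "((\<lambda>t. f (w + t *\<^sub>R a2)) has_real_derivative partial 2 f (w + t *\<^sub>R a2)) (at t)"
        using partial_at_shift[OF hp[of 2], of w t] by (simp add: a2_def)
      then have "((\<lambda>t. f (w + t *\<^sub>R a2)) has_real_derivative partial 2 f (w + t *\<^sub>R a2)) (at t within S)"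
        by (rule has_field_derivative_at_within)
      from DERIV_diff[OF this DERIV_cmult_Id[of "partial 2 f y"]] show ?thesis by simp
    qed
    have bnd: "norm (partial 2 f (w + t *\<^sub>R a2) - partial 2 f y) \<le> e/2" if "t \<in> S" for t
    proof -
      have "w + t *\<^sub>R a2 \<in> D" using inball[OF that] d0 by (auto simp: d_def dist_norm norm_minus_commute)
      moreover have "dist (w + t *\<^sub>R a2) y < d1" using inball[OF that] by (simp add: d_def dist_norm)
      ultimately show ?thesis using d1(2) by (simp add: dist_norm less_imp_le)
    qed
    have A0: "norm ((f (w + h2 *\<^sub>R a2) - partial 2 f y * h2) - (f (w + 0 *\<^sub>R a2) - partial 2 f y * 0)) \<le> e/2 * norm (h2 - 0)"
      by (rule field_differentiable_bound[OF convex_closed_segment[of 0 h2], folded S_def, OF der bnd])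
         (auto simp: S_def)
    have A: "\<bar>f z - f w - partial 2 f y * h2\<bar> \<le> e/2 * \<bar>h2\<bar>" using A0 zw by (simp add: algebra_simps)
    have "norm (f z - f y - (partial 1 f y * h $ 1 + partial 2 f y * h $ 2))
        = \<bar>(f z - f w - partial 2 f y * h2) + (f w - f y - partial 1 f y * h1)\<bar>"
      by (simp add: h1_def h2_def)
    also have "\<dots> \<le> e/2 * \<bar>h2\<bar> + e/2 * \<bar>h1\<bar>" using A B by linarith
    also have "\<dots> \<le> e/2 * norm h + e/2 * norm h"
      using h1le h2le e by (intro add_mono mult_left_mono) auto
    finally show "norm (f z - f y - (partial 1 f y * (z - y) $ 1 + partial 2 f y * (z - y) $ 2)) \<le> e * norm (z - y)"
      by (simp add: h_def)
  qed
qed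

lemma chain2:
  fixes f :: "real^2 \<Rightarrow> real"
  assumes D: "open D" and hp: "\<And>i. has_partial_on i f D" and cp: "\<And>i. continuous_on D (partial i f)"
    and g: "(\<gamma> has_vector_derivative g') (at s within T)" and gs: "\<gamma> s \<in> D"
  shows "((\<lambda>s. f (\<gamma> s)) has_real_derivative (partial 1 f (\<gamma> s) * g'$1 + partial 2 f (\<gamma> s) * g'$2)) (at s within T)"
proof -
  have "(f has_derivative (\<lambda>h. partial 1 f (\<gamma> s) * h$1 + partial 2 f (\<gamma> s) * h$2)) (at (\<gamma> s) within \<gamma> ` T)"
    using frechet2[OF D hp cp gs] by (rule has_derivative_at_withinI)
  from diff_chain_within[OF g[unfolded has_vector_derivative_def] this]
  show ?thesis unfolding has_field_derivative_def o_def
    by (rule has_derivative_eq_rhs) (auto simp: algebra_simps)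
qed

definition ee :: "real \<Rightarrow> real^2" where "ee t = cos t *\<^sub>R axis 1 1 + sin t *\<^sub>R axis 2 1"
definition ee' :: "real \<Rightarrow> real^2" where "ee' t = (- sin t) *\<^sub>R axis 1 1 + cos t *\<^sub>R axis 2 1"

lemma ee_comp[simp]: "ee t $ 1 = cos t" "ee t $ 2 = sin t" "ee' t $ 1 = - sin t" "ee' t $ 2 = cos t"
  by (simp_all add: ee_def ee'_def axis_def)

lemma norm_ee[simp]: "norm (ee t) = 1"
  by (simp add: norm2)

lemma ee_deriv: "(ee has_vector_derivative ee' t) (at t within T)"
  unfolding ee_def ee'_def
  by (auto intro!: derivative_eq_intros)

lemma cont_ee: "continuous_on A ee"
  unfolding ee_def by (intro continuous_intros)

lemma polar_in: assumes "cball x r \<subseteq> D" "0 \<le> \<rho>" "\<rho> \<le> r" shows "x + \<rho> *\<^sub>R ee t \<in> D"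
  using assms by (auto simp: dist_norm subset_iff)

lemma cont_polar:
  assumes "continuous_on D g" "cball x r \<subseteq> D"
  shows "continuous_on ({0..r} \<times> UNIV) (\<lambda>p. g (x + fst p *\<^sub>R ee (snd p)))"
proof (rule continuous_on_compose2[OF assms(1)])
  show "continuous_on ({0..r} \<times> UNIV) (\<lambda>p. x + fst p *\<^sub>R ee (snd p))"
    unfolding ee_def by (intro continuous_intros)
  show "(\<lambda>p. x + fst p *\<^sub>R ee (snd p)) ` ({0..r} \<times> UNIV) \<subseteq> D"
    using polar_in[OF assms(2)] by auto
qed

definition vr :: "(real^2 \<Rightarrow> real) \<Rightarrow> real^2 \<Rightarrow> real \<Rightarrow> real \<Rightarrow> real" where
  "vr u x \<rho> t = partial 1 u (x + \<rho> *\<^sub>R ee t) * cos t + partial 2 u (x + \<rho> *\<^sub>R ee t) * sin t"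
definition vrr :: "(real^2 \<Rightarrow> real) \<Rightarrow> real^2 \<Rightarrow> real \<Rightarrow> real \<Rightarrow> real" where
  "vrr u x \<rho> t = (partial 1 (partial 1 u) (x + \<rho> *\<^sub>R ee t) * cos t + partial 2 (partial 1 u) (x + \<rho> *\<^sub>R ee t) * sin t) * cos t
      + (partial 1 (partial 2 u) (x + \<rho> *\<^sub>R ee t) * cos t + partial 2 (partial 2 u) (x + \<rho> *\<^sub>R ee t) * sin t) * sin t"
definition ww :: "(real^2 \<Rightarrow> real) \<Rightarrow> real^2 \<Rightarrow> real \<Rightarrow> real \<Rightarrow> real" where
  "ww u x \<rho> t = - partial 1 u (x + \<rho> *\<^sub>R ee t) * sin t + partial 2 u (x + \<rho> *\<^sub>R ee t) * cos t"
definition ww' :: "(real^2 \<Rightarrow> real) \<Rightarrow> real^2 \<Rightarrow> real \<Rightarrow> real \<Rightarrow> real" where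
  "ww' u x \<rho> t = - ((partial 1 (partial 1 u) (x + \<rho> *\<^sub>R ee t) * (- \<rho> * sin t) + partial 2 (partial 1 u) (x + \<rho> *\<^sub>R ee t) * (\<rho> * cos t)) * sin t
       + partial 1 u (x + \<rho> *\<^sub>R ee t) * cos t)
      + ((partial 1 (partial 2 u) (x + \<rho> *\<^sub>R ee t) * (- \<rho> * sin t) + partial 2 (partial 2 u) (x + \<rho> *\<^sub>R ee t) * (\<rho> * cos t)) * cos t
       - partial 2 u (x + \<rho> *\<^sub>R ee t) * sin t)"

lemma polar_identity:
  "\<rho> * vrr u x \<rho> t + vr u x \<rho> t + ww' u x \<rho> t = \<rho> * laplacian u (x + \<rho> *\<^sub>R ee t)"
proof -
  have "cos t ^ 2 + sin t ^ 2 = 1" by simp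
  then show ?thesis
    unfolding vrr_def vr_def ww'_def laplacian_def sum_2
    by algebra
qed

definition SS :: "(real^2 \<Rightarrow> real) \<Rightarrow> real^2 \<Rightarrow> real \<Rightarrow> real" where
  "SS u x \<rho> = integral {0..2*pi} (\<lambda>t. u (x + \<rho> *\<^sub>R ee t))"
definition SS1 :: "(real^2 \<Rightarrow> real) \<Rightarrow> real^2 \<Rightarrow> real \<Rightarrow> real" where
  "SS1 u x \<rho> = integral {0..2*pi} (vr u x \<rho>)"
definition SS2 :: "(real^2 \<Rightarrow> real) \<Rightarrow> real^2 \<Rightarrow> real \<Rightarrow> real" where
  "SS2 u x \<rho> = integral {0..2*pi} (vrr u x \<rho>)"

context
  fixes D :: "(real^2) set" and u :: "real^2 \<Rightarrow> real" and \<mu> r :: real and x :: "real^2"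
  assumes D: "open D" and pan: "panharmonic \<mu> D u" and cb: "cball x r \<subseteq> D"
begin

lemma cu: "continuous_on D u" using pan by (simp add: panharmonic_def C2_on_def)
lemma hp0: "has_partial_on i u D" using pan by (simp add: panharmonic_def C2_on_def)
lemma cp0: "continuous_on D (partial i u)" using pan by (simp add: panharmonic_def C2_on_def)
lemma hp1: "has_partial_on j (partial i u) D" using pan by (simp add: panharmonic_def C2_on_def)
lemma cp1: "continuous_on D (partial j (partial i u))" using pan by (simp add: panharmonic_def C2_on_def)
lemma lap: "y \<in> D \<Longrightarrow> laplacian u y = \<mu>^2 * u y" using pan by (simp add: panharmonic_def)

lemma radial_line: "((\<lambda>\<rho>. x + \<rho> *\<^sub>R ee t) has_vector_derivative ee t) (at \<rho> within T)"
  by (auto intro!: derivative_eq_intros)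

lemma angular_line: "((\<lambda>t. x + \<rho> *\<^sub>R ee t) has_vector_derivative \<rho> *\<^sub>R ee' t) (at t within T)"
  by (auto intro!: derivative_eq_intros ee_deriv)

lemma d_v: "\<rho> \<in> {0..r} \<Longrightarrow> ((\<lambda>\<rho>. u (x + \<rho> *\<^sub>R ee t)) has_real_derivative vr u x \<rho> t) (at \<rho> within T)"
  using chain2[OF D hp0 cp0 radial_line polar_in[OF cb]] by (simp add: vr_def)

lemma d_vr: assumes "\<rho> \<in> {0..r}" shows "((\<lambda>\<rho>. vr u x \<rho> t) has_real_derivative vrr u x \<rho> t) (at \<rho> within T)"
proof -
  have a: "((\<lambda>\<rho>. partial i u (x + \<rho> *\<^sub>R ee t)) has_real_derivative
     partial 1 (partial i u) (x + \<rho> *\<^sub>R ee t) * cos t + partial 2 (partial i u) (x + \<rho> *\<^sub>R ee t) * sin t) (at \<rho> within T)" for i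
    using chain2[OF D hp1 cp1 radial_line polar_in[OF cb]] assms by simp
  show ?thesis unfolding vr_def vrr_def
    by (rule DERIV_add[OF DERIV_cmult_right[OF a] DERIV_cmult_right[OF a]])
qed

lemma d_ww: assumes "\<rho> \<in> {0..r}" shows "((\<lambda>t. ww u x \<rho> t) has_real_derivative ww' u x \<rho> t) (at t within T)"
proof -
  have a: "((\<lambda>t. partial i u (x + \<rho> *\<^sub>R ee t)) has_real_derivative
     partial 1 (partial i u) (x + \<rho> *\<^sub>R ee t) * (- \<rho> * sin t) + partial 2 (partial i u) (x + \<rho> *\<^sub>R ee t) * (\<rho> * cos t)) (at t within T)" for i
    using chain2[OF D hp1 cp1 angular_line polar_in[OF cb]] assms by simp
  have s: "(sin has_real_derivative cos t) (at t within T)" "(cos has_real_derivative - sin t) (at t within T)"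
    by (auto intro!: has_field_derivative_at_within DERIV_sin DERIV_cos)
  show ?thesis unfolding ww_def
    by (rule DERIV_cong[OF DERIV_add[OF DERIV_mult[OF DERIV_minus[OF a] s(1)] DERIV_mult[OF a s(2)]]])
       (simp add: ww'_def algebra_simps)
qed

lemma cont_vr: "continuous_on ({0..r} \<times> UNIV) (\<lambda>p. vr u x (fst p) (snd p))"
  unfolding vr_def
  by (intro continuous_intros cont_polar[OF cp0 cb])

lemma cont_vrr: "continuous_on ({0..r} \<times> UNIV) (\<lambda>p. vrr u x (fst p) (snd p))"
  unfolding vrr_def
  by (intro continuous_intros cont_polar[OF cp1 cb])

lemma cont_ww': "continuous_on ({0..r} \<times> UNIV) (\<lambda>p. ww' u x (fst p) (snd p))"
  unfolding ww'_def
  by (intro continuous_intros cont_polar[OF cp1 cb] cont_polar[OF cp0 cb])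

lemma cont_v: "continuous_on ({0..r} \<times> UNIV) (\<lambda>p. u (x + fst p *\<^sub>R ee (snd p)))"
  by (rule cont_polar[OF cu cb])

lemma cont_slice:
  assumes "continuous_on ({0..r} \<times> UNIV) (\<lambda>p. F (fst p) (snd p))" "\<rho> \<in> {0..r}"
  shows "continuous_on A (F \<rho>)"
proof -
  have "continuous_on UNIV (\<lambda>t. F (fst (\<rho>, t)) (snd (\<rho>, t)))"
    by (rule continuous_on_compose2[OF assms(1)]) (use assms(2) in \<open>auto intro!: continuous_intros\<close>)
  then show ?thesis by (simp add: continuous_on_subset[OF _ subset_UNIV])
qed

lemma leib:
  assumes d: "\<And>\<rho> t. \<rho> \<in> {0..r} \<Longrightarrow> ((\<lambda>\<rho>. F \<rho> t) has_real_derivative G \<rho> t) (at \<rho> within {0..r})"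
    and cF: "continuous_on ({0..r} \<times> UNIV) (\<lambda>p. F (fst p) (snd p))"
    and cG: "continuous_on ({0..r} \<times> UNIV) (\<lambda>p. G (fst p) (snd p))" and \<rho>: "\<rho> \<in> {0..r}"
  shows "((\<lambda>\<rho>. integral {0..2*pi} (F \<rho>)) has_real_derivative integral {0..2*pi} (G \<rho>)) (at \<rho> within {0..r})"
proof -
  have e: "(\<lambda>(x, t). G x t) = (\<lambda>p. G (fst p) (snd p))" by auto
  have "((\<lambda>\<rho>. integral (cbox 0 (2*pi)) (F \<rho>)) has_real_derivative integral (cbox 0 (2*pi)) (G \<rho>)) (at \<rho> within {0..r})"
  proof (rule leibniz_rule_field_derivative)
    show "((\<lambda>\<rho>. F \<rho> t) has_real_derivative G y t) (at y within {0..r})" if "y \<in> {0..r}" for y t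
      using d that by blast
    show "F y integrable_on cbox 0 (2 * pi)" if "y \<in> {0..r}" for y
      using integrable_continuous_interval[OF cont_slice[OF cF that]] by simp
    show "continuous_on ({0..r} \<times> cbox 0 (2 * pi)) (\<lambda>(x, t). G x t)"
      unfolding e by (rule continuous_on_subset[OF cG]) auto
  qed (use \<rho> in auto)
  then show ?thesis by simp
qed

lemma d_SS: "\<rho> \<in> {0..r} \<Longrightarrow> (SS u x has_real_derivative SS1 u x \<rho>) (at \<rho> within {0..r})"
  unfolding SS_def SS1_def
  by (rule leib[where F="\<lambda>\<rho> t. u (x + \<rho> *\<^sub>R ee t)", OF d_v cont_v cont_vr])

lemma d_SS1: "\<rho> \<in> {0..r} \<Longrightarrow> (SS1 u x has_real_derivative SS2 u x \<rho>) (at \<rho> within {0..r})"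
  unfolding SS1_def SS2_def
  by (rule leib[OF d_vr cont_vr cont_vrr])

lemma SS_ode: assumes "\<rho> \<in> {0..r}" shows "\<rho> * SS2 u x \<rho> + SS1 u x \<rho> = \<mu>^2 * \<rho> * SS u x \<rho>"
proof -
  have i1: "vrr u x \<rho> integrable_on {0..2*pi}" "vr u x \<rho> integrable_on {0..2*pi}"
    "(\<lambda>t. u (x + \<rho> *\<^sub>R ee t)) integrable_on {0..2*pi}"
    using cont_slice[OF cont_vrr assms] cont_slice[OF cont_vr assms]
      cont_slice[OF cont_v assms]
    by (auto simp: integrable_continuous_interval)
  have w: "(ww' u x \<rho> has_integral (ww u x \<rho> (2*pi) - ww u x \<rho> 0)) {0..2*pi}"
    by (rule fundamental_theorem_of_calculus)
       (auto simp: has_real_derivative_iff_has_vector_derivative[symmetric] intro!: d_ww assms)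
  have w0: "ww u x \<rho> (2*pi) - ww u x \<rho> 0 = 0" by (simp add: ww_def ee_def)
  have "\<rho> * SS2 u x \<rho> + SS1 u x \<rho> = integral {0..2*pi} (\<lambda>t. \<rho> * vrr u x \<rho> t + vr u x \<rho> t)"
    using i1 by (simp add: SS2_def SS1_def integral_add integrable_on_cmult_left[where 'b=real, simplified])
  also have "\<dots> = integral {0..2*pi} (\<lambda>t. \<rho> * laplacian u (x + \<rho> *\<^sub>R ee t) - ww' u x \<rho> t)"
    by (rule integral_cong) (simp add: polar_identity[symmetric] algebra_simps)
  also have "\<dots> = integral {0..2*pi} (\<lambda>t. (\<mu>^2 * \<rho>) * u (x + \<rho> *\<^sub>R ee t) - ww' u x \<rho> t)"
    by (rule integral_cong) (use lap polar_in[OF cb] assms in auto)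
  also have "\<dots> = \<mu>^2 * \<rho> * SS u x \<rho>"
  proof -
    have "integral {0..2*pi} (\<lambda>t. (\<mu>^2 * \<rho>) * u (x + \<rho> *\<^sub>R ee t) - ww' u x \<rho> t)
       = integral {0..2*pi} (\<lambda>t. (\<mu>^2 * \<rho>) * u (x + \<rho> *\<^sub>R ee t)) - integral {0..2*pi} (ww' u x \<rho>)"
      by (rule integral_diff) (use i1 w in \<open>auto intro: integrable_on_cmult_left[where 'b=real, simplified]\<close>)
    also have "\<dots> = \<mu>^2 * \<rho> * SS u x \<rho>"
      using w w0 by (simp add: SS_def integral_unique)
    finally show ?thesis .
  qed
  finally show ?thesis .
qed

end

lemma tlnt_lim: assumes "c > 0" shows "((\<lambda>t::real. t * ln (c/t)) \<longlongrightarrow> 0) (at_right 0)"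
  using assms by real_asymp

lemma tlnt_cont: assumes "c > 0" shows "continuous_on {0..} (\<lambda>t::real. t * ln (c/t))"
proof (clarsimp simp: continuous_on_eq_continuous_within)
  fix t :: real assume t: "0 \<le> t"
  show "continuous (at t within {0..}) (\<lambda>t. t * ln (c/t))"
  proof (cases "t = 0")
    case True
    then show ?thesis using tlnt_lim[OF assms]
      by (simp add: continuous_within at_within_Ici_at_right)
  next
    case False
    then have "isCont (\<lambda>t. t * ln (c/t)) t" using t assms by (auto intro!: continuous_intros)
    then show ?thesis by (simp add: continuous_at_imp_continuous_at_within)
  qed
qed

lemma tlnt_cont': assumes "continuous_on {0..c} f" "c \<ge> 0"
  shows "continuous_on {0..c} (\<lambda>t::real. t * f t * ln (c/t))"
proof (cases "c = 0")
  case True then show ?thesis by simp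
next
  case False
  have "continuous_on {0..c} (\<lambda>t::real. t * ln (c/t))"
    by (rule continuous_on_subset[OF tlnt_cont]) (use False assms in auto)
  then have "continuous_on {0..c} (\<lambda>t::real. f t * (t * ln (c/t)))"
    by (rule continuous_on_mult[OF assms(1)])
  then show ?thesis by (simp add: algebra_simps)
qed

definition KK :: "real \<Rightarrow> (real \<Rightarrow> real) \<Rightarrow> real" where
  "KK \<rho> f = integral {0..\<rho>} (\<lambda>t. t * f t * ln (\<rho>/t))"

context
  fixes D :: "(real^2) set" and u :: "real^2 \<Rightarrow> real" and \<mu> r :: real and x :: "real^2"
  assumes D: "open D" and pan: "panharmonic \<mu> D u" and cb: "cball x r \<subseteq> D"
begin

lemma cont_SS: "continuous_on {0..r} (SS u x)"
  by (rule DERIV_continuous_on[OF d_SS[OF D pan cb]])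

lemma cont_SS1: "continuous_on {0..r} (SS1 u x)"
  by (rule DERIV_continuous_on[OF d_SS1[OF D pan cb]])

lemma SS_integral_eq:
  assumes r0: "0 < \<rho>0" "\<rho>0 \<le> r"
  shows "((\<lambda>t. \<mu>^2 * (t * SS u x t * ln (\<rho>0/t))) has_integral (SS u x \<rho>0 - SS u x 0)) {0..\<rho>0}"
proof -
  define G where "G t = t * SS1 u x t * ln (\<rho>0/t) + SS u x t" for t
  have "((\<lambda>t. \<mu>^2 * (t * SS u x t * ln (\<rho>0/t))) has_integral (G \<rho>0 - G 0)) {0..\<rho>0}"
  proof (rule fundamental_theorem_of_calculus_interior)
    show "0 \<le> \<rho>0" using r0 by simp
    have c1: "continuous_on {0..\<rho>0} (SS1 u x)" "continuous_on {0..\<rho>0} (SS u x)"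
      using continuous_on_subset[OF cont_SS1] continuous_on_subset[OF cont_SS] r0 by auto
    show "continuous_on {0..\<rho>0} G"
      unfolding G_def by (intro continuous_intros tlnt_cont' c1) (use r0 in auto)
    fix t assume t: "t \<in> {0<..<\<rho>0}"
    then have ti: "t \<in> interior {0..r}" using r0 by auto
    have a1: "(SS u x has_real_derivative SS1 u x t) (at t)"
      using d_SS[OF D pan cb, of t] ti at_within_interior[OF ti] interior_subset by fastforce
    have a2: "(SS1 u x has_real_derivative SS2 u x t) (at t)"
      using d_SS1[OF D pan cb, of t] ti at_within_interior[OF ti] interior_subset by fastforce
    have ode: "t * SS2 u x t + SS1 u x t = \<mu>^2 * t * SS u x t"
      using SS_ode[OF D pan cb, of t] t r0 by auto
    have l: "((\<lambda>t. ln (\<rho>0/t)) has_real_derivative (-1/t)) (at t)"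
      using t r0 by (auto intro!: derivative_eq_intros simp: field_simps power2_eq_square)
    have "(G has_real_derivative ((1 * SS1 u x t + SS2 u x t * t) * ln (\<rho>0/t) + (-1/t) * (t * SS1 u x t) + SS1 u x t)) (at t)"
      unfolding G_def by (rule DERIV_add[OF DERIV_mult[OF DERIV_mult[OF DERIV_ident a2] l] a1])
    also have "(1 * SS1 u x t + SS2 u x t * t) * ln (\<rho>0/t) + (-1/t) * (t * SS1 u x t) + SS1 u x t
        = \<mu>^2 * (t * SS u x t * ln (\<rho>0/t))"
    proof -
      have "(-1/t) * (t * SS1 u x t) = - SS1 u x t" using t by auto
      moreover have "(1 * SS1 u x t + SS2 u x t * t) = \<mu>^2 * t * SS u x t" using ode by (simp add: algebra_simps)
      ultimately show ?thesis by simp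
    qed
    finally show "(G has_vector_derivative \<mu>^2 * (t * SS u x t * ln (\<rho>0/t))) (at t)"
      by (simp add: has_real_derivative_iff_has_vector_derivative)
  qed
  then show ?thesis using r0 by (simp add: G_def)
qed

lemma SS_KK: assumes "\<rho> \<in> {0..r}" shows "SS u x \<rho> = SS u x 0 + \<mu>^2 * KK \<rho> (SS u x)"
proof (cases "\<rho> = 0")
  case True then show ?thesis by (simp add: KK_def)
next
  case False
  then have "0 < \<rho>" "\<rho> \<le> r" using assms by auto
  from integral_unique[OF SS_integral_eq[OF this]] show ?thesis
    by (simp add: KK_def)
qed

end

lemma mono_int:
  assumes "\<rho> \<ge> 0"
  shows "((\<lambda>t. t * t^(2*k) * ln (\<rho>/t)) has_integral \<rho>^(2*k+2) / (2*k+2)^2) {0..\<rho>}"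
proof (cases "\<rho> = 0")
  case True then show ?thesis by simp
next
  case False
  then have r: "\<rho> > 0" using assms by simp
  define m :: real where "m = 2*k+2"
  have m: "m > 0" by (simp add: m_def)
  define F where "F t = t * t^(2*k+1) * ln (\<rho>/t) / m + t^(2*k+2) / m^2" for t
  have "((\<lambda>t. t * t^(2*k) * ln (\<rho>/t)) has_integral (F \<rho> - F 0)) {0..\<rho>}"
  proof (rule fundamental_theorem_of_calculus_interior)
    show "0 \<le> \<rho>" using r by simp
    have c: "continuous_on {0..\<rho>} (\<lambda>t. t * t^(2*k+1) * ln (\<rho>/t))"
      by (rule tlnt_cont') (use r in \<open>auto intro!: continuous_intros\<close>)
    show "continuous_on {0..\<rho>} F" unfolding F_def
      using m by (intro continuous_on_add continuous_on_divide[OF c] continuous_on_const continuous_on_power continuous_on_id) (auto intro!: continuous_intros)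
    fix t assume t: "t \<in> {0<..<\<rho>}"
    have l: "((\<lambda>t. ln (\<rho>/t)) has_real_derivative (-1/t)) (at t)"
      using t r by (auto intro!: derivative_eq_intros simp: field_simps power2_eq_square)
    have p1: "((\<lambda>t. t * t^(2*k+1)) has_real_derivative m * t^(2*k+1)) (at t)"
    proof -
      have "((\<lambda>t. t^(2*k+2)) has_real_derivative of_nat (2*k+2) * t^(2*k+1)) (at t)"
        using DERIV_pow[of "2*k+2" t] by simp
      then show ?thesis by (simp add: m_def)
    qed
    have p2: "((\<lambda>t. t^(2*k+2)) has_real_derivative m * t^(2*k+1)) (at t)"
      using DERIV_pow[of "2*k+2" t] by (simp add: m_def)
    have "(F has_real_derivative ((m * t^(2*k+1) * ln (\<rho>/t) + (-1/t) * (t * t^(2*k+1))) / m + m * t^(2*k+1) / m^2)) (at t)"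
      unfolding F_def
      by (rule DERIV_add[OF DERIV_cdivide[OF DERIV_mult[OF p1 l]] DERIV_cdivide[OF p2]])
    also have "(m * t^(2*k+1) * ln (\<rho>/t) + (-1/t) * (t * t^(2*k+1))) / m + m * t^(2*k+1) / m^2
       = t * t^(2*k) * ln (\<rho>/t)"
      using t m by (simp add: field_simps power2_eq_square)
    finally show "(F has_vector_derivative t * t^(2*k) * ln (\<rho>/t)) (at t)"
      by (simp add: has_real_derivative_iff_has_vector_derivative)
  qed
  moreover have "F \<rho> - F 0 = \<rho>^(2*k+2) / (2*k+2)^2" by (simp add: F_def m_def)
  ultimately show ?thesis by simp
qed

lemma tail:
  fixes S :: "real \<Rightarrow> real" and \<mu> \<rho> B q :: real and P :: "nat \<Rightarrow> real \<Rightarrow> real"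
  assumes q_def: "q = \<mu>^2/4" and B0: "B \<ge> 0"
   and P_def: "\<And>n t. P n t = (\<Sum>k<n. q^k * t^(2*k) / (fact k)^2)"
   and main: "\<And>n. \<bar>S \<rho> - S 0 * P n \<rho>\<bar> \<le> B * q^n * \<rho>^(2*n) / (fact n)^2"
  shows "S \<rho> = S 0 * bessel_I0 (\<mu>*\<rho>)"
proof -
  define y where "y = q * \<rho>^2"
  have y: "y \<ge> 0" by (simp add: y_def q_def)
  have trm: "q^k * \<rho>^(2*k) = (\<mu>*\<rho>/2)^(2*k)" for k
  proof -
    have "(\<mu>*\<rho>/2)^(2*k) = ((\<mu>*\<rho>/2)^2)^k" by (rule power_mult)
    also have "(\<mu>*\<rho>/2)^2 = q * \<rho>^2" by (simp add: q_def power_mult_distrib power_divide)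
    also have "(q*\<rho>^2)^k = q^k * \<rho>^(2*k)" by (simp add: power_mult_distrib power_mult)
    finally show ?thesis by simp
  qed
  have yk: "y^k = q^k * \<rho>^(2*k)" for k by (simp add: y_def power_mult_distrib power_mult)
  have Pn: "P n \<rho> = (\<Sum>k<n. (\<mu>*\<rho>/2)^(2*k) / (fact k)^2)" for n
    by (simp add: P_def trm)
  have sumexp: "summable (\<lambda>k. inverse (fact k) * y^k)" by (rule summable_exp)
  have fle: "y^k / (fact k)^2 \<le> inverse (fact k) * y^k" for k
  proof -
    have f1: "(fact k :: real) \<ge> 1" by simp
    have "y^k / (fact k)^2 \<le> y^k / fact k"
      by (rule divide_left_mono) (use f1 y in \<open>auto simp: power2_eq_square\<close>)
    then show ?thesis by (simp add: divide_inverse mult.commute)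
  qed
  have summ: "summable (\<lambda>k. (\<mu>*\<rho>/2)^(2*k) / (fact k)^2)"
  proof (rule summable_comparison_test'[OF sumexp])
    fix k :: nat
    have "norm ((\<mu>*\<rho>/2)^(2*k) / (fact k)^2) = y^k / (fact k)^2"
      using y by (simp add: yk trm)
    then show "norm ((\<mu>*\<rho>/2)^(2*k) / (fact k)^2) \<le> inverse (fact k) * y^k"
      using fle[of k] by linarith
  qed
  have limP: "(\<lambda>n. P n \<rho>) \<longlonglongrightarrow> bessel_I0 (\<mu>*\<rho>)"
    unfolding Pn bessel_I0_def by (rule summable_LIMSEQ[OF summ])
  have lim0: "(\<lambda>n. B * (inverse (fact n) * y^n)) \<longlonglongrightarrow> 0"
    using tendsto_mult[OF tendsto_const[of B] summable_LIMSEQ_zero[OF sumexp]] by simp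
  have le: "\<bar>S \<rho> - S 0 * P n \<rho>\<bar> \<le> B * (inverse (fact n) * y^n)" for n
  proof -
    have "B * q^n * \<rho>^(2*n) / (fact n)^2 = B * (y^n / (fact n)^2)"
      by (simp add: yk)
    also have "\<dots> \<le> B * (inverse (fact n) * y^n)"
      by (rule mult_left_mono[OF fle B0])
    finally show ?thesis using main[of n] by linarith
  qed
  have "\<bar>S \<rho> - S 0 * bessel_I0 (\<mu>*\<rho>)\<bar> \<le> 0"
    by (rule tendsto_le[OF _ lim0 tendsto_rabs[OF tendsto_diff[OF tendsto_const tendsto_mult[OF tendsto_const limP]]]])
       (use le in auto)
  then show ?thesis by simp
qed

lemma bessel_iter:
  fixes S :: "real \<Rightarrow> real" and \<mu> r :: real
  assumes cS: "continuous_on {0..r} S"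
    and eq: "\<And>\<rho>. \<rho> \<in> {0..r} \<Longrightarrow> S \<rho> = S 0 + \<mu>^2 * KK \<rho> S"
    and \<rho>: "\<rho> \<in> {0..r}"
  shows "S \<rho> = S 0 * bessel_I0 (\<mu>*\<rho>)"
proof -
  have "bounded (S ` {0..r})" by (rule compact_imp_bounded[OF compact_continuous_image[OF cS compact_Icc]])
  then obtain B where B': "\<forall>y\<in>S ` {0..r}. norm y \<le> B" by (auto simp: bounded_iff)
  have B: "\<bar>S t\<bar> \<le> B" if "t \<in> {0..r}" for t using B' that by auto
  have B0: "B \<ge> 0" using B[OF \<rho>] by linarith
  define q where "q = \<mu>^2/4"
  have q: "q \<ge> 0" by (simp add: q_def)
  define P where "P n t = (\<Sum>k<n. q^k * t^(2*k) / (fact k)^2)" for n t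
  have KP: "((\<lambda>t. t * P n t * ln (s/t)) has_integral (\<Sum>k<n. q^k / (fact k)^2 * (s^(2*k+2)/(2*k+2)^2))) {0..s}"
    if "s \<ge> 0" for n s
  proof -
    have "((\<lambda>t. \<Sum>k<n. q^k/(fact k)^2 * (t * t^(2*k) * ln (s/t))) has_integral
          (\<Sum>k<n. q^k/(fact k)^2 * (s^(2*k+2)/(2*k+2)^2))) {0..s}"
      by (intro has_integral_sum finite_lessThan has_integral_mult_right mono_int that)
    moreover have "(\<lambda>t. \<Sum>k<n. q^k/(fact k)^2 * (t * t^(2*k) * ln (s/t))) = (\<lambda>t. t * P n t * ln (s/t))"
      by (auto simp: P_def sum_distrib_left sum_distrib_right intro!: sum.cong ext)
    ultimately show ?thesis by simp
  qed
  have Psuc: "P (Suc n) s = 1 + \<mu>^2 * (\<Sum>k<n. q^k/(fact k)^2 * (s^(2*k+2)/(2*k+2)^2))" for n s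
  proof -
    have "P (Suc n) s = 1 + (\<Sum>k<n. q^(Suc k) * s^(2*Suc k) / (fact (Suc k))^2)"
      unfolding P_def by (subst sum.lessThan_Suc_shift) simp
    also have "(\<Sum>k<n. q^(Suc k) * s^(2*Suc k) / (fact (Suc k))^2)
        = (\<Sum>k<n. \<mu>^2 * (q^k/(fact k)^2 * (s^(2*k+2)/(2*k+2)^2)))"
    proof (rule sum.cong)
      fix k assume "k \<in> {..<n}"
      have f: "(fact k :: real) \<noteq> 0" by simp
      show "q^(Suc k) * s^(2*Suc k) / (fact (Suc k))^2 = \<mu>^2 * (q^k/(fact k)^2 * (s^(2*k+2)/(2*k+2)^2))"
        using f by (simp add: q_def fact_Suc field_simps power2_eq_square)
    qed simp
    finally show ?thesis by (simp add: sum_distrib_left)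
  qed
  have main: "\<forall>t\<in>{0..r}. \<bar>S t - S 0 * P n t\<bar> \<le> B * q^n * t^(2*n) / (fact n)^2" for n
  proof (induction n)
    case 0 then show ?case using B by (simp add: P_def)
  next
    case (Suc n)
    show ?case
    proof
      fix s assume s: "s \<in> {0..r}"
      define E where "E t = S t - S 0 * P n t" for t
      define c where "c = B * q^n / (fact n)^2"
      have c0: "c \<ge> 0" using B0 q by (simp add: c_def)
      have cS': "continuous_on {0..s} S" using continuous_on_subset[OF cS] s by auto
      have iS: "(\<lambda>t. t * S t * ln (s/t)) integrable_on {0..s}"
        using integrable_continuous_interval[OF tlnt_cont'[OF cS']] s by auto
      have KE: "((\<lambda>t. t * E t * ln (s/t)) has_integral
             (KK s S - S 0 * (\<Sum>k<n. q^k/(fact k)^2 * (s^(2*k+2)/(2*k+2)^2)))) {0..s}"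
      proof -
        have "((\<lambda>t. t * S t * ln (s/t) - S 0 * (t * P n t * ln (s/t))) has_integral
             (KK s S - S 0 * (\<Sum>k<n. q^k/(fact k)^2 * (s^(2*k+2)/(2*k+2)^2)))) {0..s}"
          unfolding KK_def
          by (rule has_integral_diff[OF integrable_integral[OF iS] has_integral_mult_right[OF KP]]) (use s in auto)
        moreover have "(\<lambda>t. t * S t * ln (s/t) - S 0 * (t * P n t * ln (s/t))) = (\<lambda>t. t * E t * ln (s/t))"
          by (auto simp: E_def algebra_simps)
        ultimately show ?thesis by simp
      qed
      have bI: "((\<lambda>t. c * (t * t^(2*n) * ln (s/t))) has_integral c * (s^(2*n+2)/(2*n+2)^2)) {0..s}"
        by (intro has_integral_mult_right mono_int) (use s in auto)
      have pw: "norm (t * E t * ln (s/t)) \<le> c * (t * t^(2*n) * ln (s/t))" if t: "t \<in> {0..s}" for t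
      proof (cases "t = 0")
        case True then show ?thesis by simp
      next
        case False
        then have tp: "t > 0" using t by auto
        have l0: "ln (s/t) \<ge> 0" using t tp by (auto simp: field_simps)
        have "\<bar>E t\<bar> \<le> c * t^(2*n)" using Suc.IH t s by (auto simp: E_def c_def)
        then have "t * \<bar>E t\<bar> * ln (s/t) \<le> t * (c * t^(2*n)) * ln (s/t)"
          using tp l0 by (intro mult_right_mono mult_left_mono) auto
        then show ?thesis using tp l0 by (simp add: abs_mult algebra_simps)
      qed
      have gen: "\<And>X Y Z. norm (X::real) \<le> Y \<Longrightarrow> Z = \<mu>^2 * X \<Longrightarrow> \<bar>Z\<bar> \<le> \<mu>^2 * Y"
        by (simp add: abs_mult mult_left_mono)
      have "norm (KK s S - S 0 * (\<Sum>k<n. q^k/(fact k)^2 * (s^(2*k+2)/(2*k+2)^2))) \<le> c * (s^(2*n+2)/(2*n+2)^2)"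
        using integral_norm_bound_integral[OF has_integral_integrable[OF KE] has_integral_integrable[OF bI] pw]
          integral_unique[OF KE] integral_unique[OF bI] by simp
      moreover have "S s - S 0 * P (Suc n) s = \<mu>^2 * (KK s S - S 0 * (\<Sum>k<n. q^k/(fact k)^2 * (s^(2*k+2)/(2*k+2)^2)))"
        using eq[OF s] Psuc[of n s] by (simp add: algebra_simps)
ultimately have "\<bar>S s - S 0 * P (Suc n) s\<bar> \<le> \<mu>^2 * (c * (s^(2*n+2)/(2*n+2)^2))"
        by (rule gen)
      also have "\<mu>^2 * (c * (s^(2*n+2)/(2*n+2)^2)) = B * q^Suc n * s^(2*Suc n) / (fact (Suc n))^2"
      proof -
        have f: "(fact n :: real) \<noteq> 0" by simp
        show ?thesis using f by (simp add: c_def q_def fact_Suc field_simps power2_eq_square)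
      qed
      finally show "\<bar>S s - S 0 * P (Suc n) s\<bar> \<le> B * q^Suc n * s^(2*Suc n) / (fact (Suc n))^2" .
    qed
  qed
  show ?thesis
    by (rule tail[OF q_def B0 P_def]) (use main \<rho> in blast)
qed

definition fro :: "real \<times> real \<Rightarrow> real^2" where "fro q = vector [fst q, snd q]"
definition tov :: "real^2 \<Rightarrow> real \<times> real" where "tov p = (p$1, p$2)"

lemma fro_tov[simp]: "fro (tov p) = p" by (simp add: fro_def tov_def vec_eq_iff forall_2)
lemma tov_fro[simp]: "tov (fro q) = q" by (simp add: fro_def tov_def)

lemma fro_cbox: "fro ` cbox (u1,u2) (v1,v2) = cbox (vector[u1,u2]) (vector[v1,v2])"
proof (intro set_eqI iffI)
  fix z assume "z \<in> fro ` cbox (u1,u2) (v1,v2)"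
  then show "z \<in> cbox (vector[u1,u2]) (vector[v1,v2])"
    by (auto simp: fro_def mem_box_cart forall_2)
next
  fix z :: "real^2" assume z: "z \<in> cbox (vector[u1,u2]) (vector[v1,v2])"
  have "tov z \<in> cbox (u1,u2) (v1,v2)" using z by (auto simp: tov_def mem_box_cart forall_2)
  then show "z \<in> fro ` cbox (u1,u2) (v1,v2)" by (metis fro_tov image_eqI)
qed

lemma vec2_eta: "vector [p$1, p$2] = (p::real^2)" by (simp add: vec_eq_iff forall_2)

lemma tov_cbox: "tov ` cbox a b = cbox (a$1, a$2) (b$1, b$2)"
proof -
  have "tov ` cbox a b = tov ` fro ` cbox (a$1, a$2) (b$1, b$2)"
    by (simp only: fro_cbox vec2_eta)
  also have "\<dots> = cbox (a$1, a$2) (b$1, b$2)" by (simp add: image_image)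
  finally show ?thesis .
qed

lemma UNIV_2': "(UNIV :: 2 set) = {1, 2}"
  using exhaust_2 by auto

lemma prod_2: "prod f (UNIV::2 set) = f 1 * f 2"
  by (simp add: UNIV_2')

lemma content_fro: "measure lborel (fro ` cbox u v) = measure lborel (cbox u v)"
proof -
  obtain u1 u2 v1 v2 where uv: "u = (u1,u2)" "v = (v1,v2)" by (cases u, cases v) auto
  show ?thesis
  proof (cases "u1 \<le> v1 \<and> u2 \<le> v2")
    case True
    then have ne: "cbox (vector[u1,u2]) (vector[v1,v2]) \<noteq> ({} :: (real^2) set)"
      by (auto simp: interval_ne_empty_cart forall_2)
    show ?thesis using True unfolding uv fro_cbox content_cbox_cart[OF ne] content_Pair
      by (simp add: prod_2)
  next
    case False
    then have e: "cbox (vector[u1,u2]) (vector[v1,v2]) = ({} :: (real^2) set)"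
    proof (cases "u1 \<le> v1")
      case True
      then have "v2 < u2" using False by auto
      then show ?thesis unfolding interval_eq_empty_cart by (intro exI[of _ 2]) simp
    next
      case False
      then show ?thesis unfolding interval_eq_empty_cart by (intro exI[of _ 1]) simp
    qed
    show ?thesis using False unfolding uv fro_cbox e content_Pair by auto
  qed
qed

lemma fro_alt: "fro = (\<lambda>q. fst q *\<^sub>R axis 1 1 + snd q *\<^sub>R axis 2 1)"
  by (auto simp: fro_def vec_eq_iff forall_2 axis_def)

lemma cont_fro: "continuous_on A fro"
  unfolding fro_alt by (intro continuous_intros)

lemma cart_fubini:
  fixes \<phi> :: "real^2 \<Rightarrow> real"
  assumes c: "continuous_on (cbox (vector[a1,a2]) (vector[b1,b2])) \<phi>"
  shows "integral (cbox (vector[a1,a2]) (vector[b1,b2])) \<phi>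
       = integral {a1..b1} (\<lambda>s. integral {a2..b2} (\<lambda>t. \<phi> (vector[s,t])))"
proof -
  let ?C = "cbox (vector[a1,a2]) (vector[b1,b2]) :: (real^2) set"
  have i: "(\<phi> has_integral integral ?C \<phi>) ?C"
    using integrable_continuous[OF c] by (rule integrable_integral)
  have "((\<lambda>q. \<phi> (fro q)) has_integral (1/1) *\<^sub>R integral ?C \<phi>) (tov ` ?C)"
  proof (rule has_integral_twiddle[where g=fro and h=tov and r=1, OF _ _ _ _ _ _ _ i])
    show "continuous (at x) fro" for x
      using cont_fro[of UNIV] by (cases x) (simp add: continuous_on_eq_continuous_at)
    show "\<exists>w z. fro ` cbox u v = cbox w z" for u v
      by (cases u, cases v) (simp add: fro_cbox, blast)
    show "\<exists>w z. tov ` cbox u v = cbox w z" for u v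
      by (simp add: tov_cbox, blast)
    show "measure lborel (fro ` cbox u v) = 1 * measure lborel (cbox u v)" for u v
      by (simp add: content_fro)
  qed auto
  moreover have "tov ` ?C = cbox (a1,a2) (b1,b2)" by (simp add: tov_cbox)
  ultimately have h: "((\<lambda>q. \<phi> (fro q)) has_integral integral ?C \<phi>) (cbox (a1,a2) (b1,b2))" by simp
  have cc: "continuous_on (cbox (a1,a2) (b1,b2)) (\<lambda>q. \<phi> (fro q))"
    by (rule continuous_on_compose2[OF c cont_fro]) (simp add: fro_cbox[symmetric])
  have "integral (cbox (a1,a2) (b1,b2)) (\<lambda>q. \<phi> (fro q))
      = integral (cbox a1 b1) (\<lambda>s. integral (cbox a2 b2) (\<lambda>t. \<phi> (fro (s,t))))"
    by (rule integral_prod_continuous[OF cc])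
  then show ?thesis using integral_unique[OF h] by (simp add: fro_def)
qed

lemma ee_inj:
  assumes "ee a = ee b" "0 < a" "a < 2*pi" "0 < b" "b < 2*pi"
  shows "a = b"
proof -
  have "sin a = sin b \<and> cos a = cos b" using assms(1) by (metis ee_comp(1,2))
  then obtain n :: int where n: "a = b + 2 * pi * n" using sin_cos_eq_iff by blast
  have "\<bar>2 * pi * n\<bar> < 2 * pi" using assms n by auto
  then have "\<bar>real_of_int n\<bar> < 1" by (simp add: abs_mult)
  then have "n = 0" by linarith
  then show ?thesis using n by simp
qed

lemma polar_integral:
  fixes h :: "real^2 \<Rightarrow> real" and x :: "real^2" and r :: real
  assumes r: "r > 0"
    and ch: "continuous_on (cbox (vector[0,0]) (vector[r,2*pi])) (\<lambda>p::real^2. p$1 * h (x + p$1 *\<^sub>R ee (p$2)))"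
  shows "integral (ball x r) h = integral {0..r} (\<lambda>t. integral {0..2*pi} (\<lambda>\<theta>. t * h (x + t *\<^sub>R ee \<theta>)))"
proof -
  define a0 :: "real^2" where "a0 = vector[0,0]"
  define b0 :: "real^2" where "b0 = vector[r,2*pi]"
  define Sb where "Sb = box a0 b0"
  define g where "g p = x + (p$1) *\<^sub>R ee (p$2)" for p :: "real^2"
  define g' where "g' p = (\<lambda>k::real^2. (k$1) *\<^sub>R ee (p$2) + (p$1 * k$2) *\<^sub>R ee' (p$2))" for p :: "real^2"
  define \<phi> where "\<phi> p = p$1 * h (g p)" for p
  define F where "F y = (vec (h y) :: real^1)" for y
  have memS: "p \<in> Sb \<longleftrightarrow> 0 < p$1 \<and> p$1 < r \<and> 0 < p$2 \<and> p$2 < 2*pi" for p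
    by (simp add: Sb_def a0_def b0_def mem_box_cart forall_2)
  have dg: "(g has_derivative g' p) (at p within Sb)" for p
  proof -
    have e: "((ee \<circ> (\<lambda>p::real^2. p$2)) has_derivative ((\<lambda>k. k *\<^sub>R ee' (p$2)) \<circ> (\<lambda>k. k$2))) (at p within Sb)"
      by (rule diff_chain_within[OF bounded_linear_imp_has_derivative[OF bounded_linear_vec_nth]
            ee_deriv[unfolded has_vector_derivative_def]])
    have "((\<lambda>p. x + (p$1) *\<^sub>R (ee \<circ> (\<lambda>p::real^2. p$2)) p) has_derivative
          (\<lambda>k. 0 + ((p$1) *\<^sub>R ((\<lambda>k. k *\<^sub>R ee' (p$2)) \<circ> (\<lambda>k. k$2)) k + (k$1) *\<^sub>R (ee \<circ> (\<lambda>p::real^2. p$2)) p))) (at p within Sb)"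
      by (intro has_derivative_add has_derivative_const has_derivative_scaleR e
          bounded_linear_imp_has_derivative[OF bounded_linear_vec_nth])
    then show ?thesis unfolding g_def g'_def o_def
      by (rule has_derivative_eq_rhs) (auto simp: algebra_simps)
  qed
  have detg: "det (matrix (g' p)) = p$1" for p
  proof -
    have "det (matrix (g' p)) = p$1 * (cos (p$2))^2 + p$1 * (sin (p$2))^2"
      by (simp add: det_2 matrix_def g'_def axis_def power2_eq_square algebra_simps)
    also have "\<dots> = p$1" by (simp add: distrib_left[symmetric])
    finally show ?thesis .
  qed
  have gnorm: "dist x (g p) = \<bar>p$1\<bar>" for p by (simp add: g_def dist_norm)
  have inj: "inj_on g Sb"
  proof (rule inj_onI)
    fix p q assume p: "p \<in> Sb" and q: "q \<in> Sb" and e: "g p = g q"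
    have "\<bar>p$1\<bar> = \<bar>q$1\<bar>" using gnorm[of p] gnorm[of q] e by simp
    then have 1: "p$1 = q$1" using p q by (simp add: memS)
    then have "ee (p$2) = ee (q$2)" using e p by (simp add: g_def memS)
    then have 2: "p$2 = q$2" using p q by (intro ee_inj) (auto simp: memS)
    show "p = q" using 1 2 by (simp add: vec_eq_iff forall_2)
  qed
  have img: "g ` Sb \<subseteq> ball x r" using gnorm by (auto simp: memS)
  have rest: "ball x r - g ` Sb \<subseteq> {y. axis 2 1 \<bullet> y = x$2}"
  proof
    fix y assume y: "y \<in> ball x r - g ` Sb"
    show "y \<in> {y. axis 2 1 \<bullet> y = x$2}"
    proof (rule ccontr)
      assume ne: "y \<notin> {y. axis 2 1 \<bullet> y = x$2}"
      then have ne2: "y$2 \<noteq> x$2" by (simp add: inner_axis')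
      define v where "v = y - x"
      define \<rho> where "\<rho> = norm v"
      have v2: "v$2 \<noteq> 0" using ne2 by (simp add: v_def)
      have \<rho>0: "\<rho> > 0" using v2 by (auto simp: \<rho>_def)
      have \<rho>r: "\<rho> < r" using y by (simp add: \<rho>_def v_def dist_norm norm_minus_commute)
      have n: "\<rho>^2 = (v$1)^2 + (v$2)^2" by (simp add: \<rho>_def norm2)
      have "(v$1/\<rho>)^2 + (v$2/\<rho>)^2 = ((v$1)^2 + (v$2)^2) / \<rho>^2"
        by (simp add: power_divide add_divide_distrib)
      also have "\<dots> = 1" using \<rho>0 n by (metis less_numeral_extra(3) divide_self power_not_zero)
      finally have "(v$1/\<rho>)^2 + (v$2/\<rho>)^2 = 1" .
      then obtain t where t: "0 \<le> t" "t < 2*pi" "v$1/\<rho> = cos t" "v$2/\<rho> = sin t"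
        by (rule sincos_total_2pi)
      have "t \<noteq> 0" using t(4) v2 \<rho>0 by auto
      define p :: "real^2" where "p = vector [\<rho>, t]"
      have "p \<in> Sb" using t \<rho>0 \<rho>r \<open>t \<noteq> 0\<close> by (simp add: memS p_def)
      moreover have "g p = y"
        using t \<rho>0 by (simp add: g_def p_def vec_eq_iff forall_2 v_def field_simps)
      ultimately show False using y by auto
    qed
  qed
  have negl: "negligible (ball x r - g ` Sb)"
    by (rule negligible_subset[OF negligible_hyperplane[of "axis 2 1" "x$2"] rest]) (simp add: axis_eq_0_iff)
  have cphi: "continuous_on (cbox a0 b0) \<phi>"
    using ch by (simp add: \<phi>_def g_def a0_def b0_def)
  have cvphi: "continuous_on (cbox a0 b0) (\<lambda>p. vec (\<phi> p) :: real^1)"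
    unfolding vec_def by (intro continuous_on_vec_lambda cphi)
  have aphi: "(\<lambda>p. vec (\<phi> p) :: real^1) absolutely_integrable_on Sb"
    unfolding Sb_def absolutely_integrable_on_open_interval
    by (rule absolutely_integrable_continuous[OF cvphi])
  have eqS: "\<bar>det (matrix (g' p))\<bar> *\<^sub>R F (g p) = vec (\<phi> p)" if "p \<in> Sb" for p
    using that by (simp add: detg memS F_def \<phi>_def vec_eq_iff)
  have Sleb: "Sb \<in> sets lebesgue" by (simp add: Sb_def fmeasurableD)
  have lhs: "(\<lambda>p. \<bar>det (matrix (g' p))\<bar> *\<^sub>R F (g p)) absolutely_integrable_on Sb \<and>
        integral Sb (\<lambda>p. \<bar>det (matrix (g' p))\<bar> *\<^sub>R F (g p)) = integral Sb (\<lambda>p. vec (\<phi> p))"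
  proof
    show "(\<lambda>p. \<bar>det (matrix (g' p))\<bar> *\<^sub>R F (g p)) absolutely_integrable_on Sb"
      by (rule absolutely_integrable_spike[OF aphi negligible_empty]) (simp add: eqS)
    show "integral Sb (\<lambda>p. \<bar>det (matrix (g' p))\<bar> *\<^sub>R F (g p)) = integral Sb (\<lambda>p. vec (\<phi> p))"
      by (rule integral_cong) (simp add: eqS)
  qed
  have cov: "F absolutely_integrable_on (g ` Sb) \<and> integral (g ` Sb) F = integral Sb (\<lambda>p. vec (\<phi> p))"
    using has_absolute_integral_change_of_variables[OF Sleb dg inj, of F] lhs by blast
  have Fint: "F integrable_on (g ` Sb)" using cov set_lebesgue_integral_eq_integral(1) by blast
  have vint: "(\<lambda>p. vec (\<phi> p) :: real^1) integrable_on Sb" using aphi set_lebesgue_integral_eq_integral(1) by blast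
  have "integral (ball x r) h = integral (g ` Sb) h"
  proof (rule integral_spike_set)
    show "negligible {y \<in> ball x r - g ` Sb. h y \<noteq> 0}"
      by (rule negligible_subset[OF negl]) auto
    show "negligible {y \<in> g ` Sb - ball x r. h y \<noteq> 0}"
      by (rule negligible_subset[OF negligible_empty]) (use img in auto)
  qed
  also have "\<dots> = integral (g ` Sb) F $ 1"
    using integral_component_eq_cart[OF Fint, of 1] by (simp add: F_def)
  also have "\<dots> = integral Sb (\<lambda>p. vec (\<phi> p) :: real^1) $ 1" using cov by simp
  also have "\<dots> = integral Sb \<phi>"
    using integral_component_eq_cart[OF vint, of 1] by simp
  also have "\<dots> = integral (cbox a0 b0) \<phi>" by (simp add: Sb_def integral_open_interval)
  also have "\<dots> = integral {0..r} (\<lambda>s. integral {0..2*pi} (\<lambda>t. \<phi> (vector[s,t])))"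
    unfolding a0_def b0_def by (rule cart_fubini[OF cphi[unfolded a0_def b0_def]])
  also have "\<dots> = integral {0..r} (\<lambda>t. integral {0..2*pi} (\<lambda>\<theta>. t * h (x + t *\<^sub>R ee \<theta>)))"
    by (simp add: \<phi>_def g_def)
  finally show ?thesis .
qed

theorem theorem5p1:
  fixes D :: "(real^2) set" and u :: "real^2 \<Rightarrow> real" and \<mu> r :: real and x :: "real^2"
  assumes "open D" and "connected D"
    and "\<mu> \<noteq> 0" and "panharmonic \<mu> D u"
    and "x \<in> D" and "r > 0" and "cball x r \<subseteq> D"
  shows "a_fun (\<mu> * r) * u x =
           1 / (pi * r\<^sup>2) * integral (ball x r) (\<lambda>y. u y * ln (r / dist x y))"
proof -
  note D = assms(1) and pan = assms(4) and cb = assms(7) and r = assms(6) and mu = assms(3)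
  have cu: "continuous_on D u" using cu[OF D pan cb] .
  let ?h = "\<lambda>y. u y * ln (r / dist x y)"
  have ch: "continuous_on (cbox (vector[0,0]) (vector[r,2*pi])) (\<lambda>p::real^2. p$1 * ?h (x + p$1 *\<^sub>R ee (p$2)))"
  proof -
    have c1: "continuous_on (cbox (vector[0,0]) (vector[r,2*pi])) (\<lambda>p::real^2. p$1 * ln (r / p$1))"
      by (rule continuous_on_compose2[OF tlnt_cont[OF r], of _ "\<lambda>p::real^2. p$1"])
         (auto intro!: continuous_intros simp: mem_box_cart forall_2)
    have c2: "continuous_on (cbox (vector[0,0]) (vector[r,2*pi])) (\<lambda>p::real^2. u (x + p$1 *\<^sub>R ee (p$2)))"
    proof (rule continuous_on_compose2[OF cu])
      show "continuous_on (cbox (vector[0,0]) (vector[r,2*pi])) (\<lambda>p::real^2. x + p$1 *\<^sub>R ee (p$2))"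
        unfolding ee_def by (intro continuous_intros)
      show "(\<lambda>p::real^2. x + p$1 *\<^sub>R ee (p$2)) ` cbox (vector[0,0]) (vector[r,2*pi]) \<subseteq> D"
        using polar_in[OF cb] by (auto simp: mem_box_cart forall_2)
    qed
    have "continuous_on (cbox (vector[0,0]) (vector[r,2*pi])) (\<lambda>p::real^2. p$1 * ln (r / p$1) * u (x + p$1 *\<^sub>R ee (p$2)))"
      by (rule continuous_on_mult[OF c1 c2])
    then show ?thesis
      by (rule continuous_on_eq) (auto simp: mem_box_cart forall_2 dist_norm)
  qed
  have "integral (ball x r) ?h = integral {0..r} (\<lambda>t. integral {0..2*pi} (\<lambda>\<theta>. t * ?h (x + t *\<^sub>R ee \<theta>)))"
    by (rule polar_integral[OF r ch])
  also have "\<dots> = integral {0..r} (\<lambda>t. t * SS u x t * ln (r/t))"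
  proof (rule integral_cong)
    fix t assume t: "t \<in> {0..r}"
    have "integral {0..2*pi} (\<lambda>\<theta>. t * ?h (x + t *\<^sub>R ee \<theta>))
        = integral {0..2*pi} (\<lambda>\<theta>. (t * ln (r/t)) * u (x + t *\<^sub>R ee \<theta>))"
      by (rule integral_cong) (use t in \<open>simp add: dist_norm\<close>)
    also have "\<dots> = t * SS u x t * ln (r/t)" by (simp add: SS_def)
    finally show "integral {0..2*pi} (\<lambda>\<theta>. t * ?h (x + t *\<^sub>R ee \<theta>)) = t * SS u x t * ln (r/t)" .
  qed
  also have "\<dots> = KK r (SS u x)" by (simp add: KK_def)
  finally have I: "integral (ball x r) ?h = KK r (SS u x)" .
  have rr: "r \<in> {0..r}" using r by simp
  have K: "SS u x r = SS u x 0 + \<mu>^2 * KK r (SS u x)" by (rule SS_KK[OF D pan cb rr])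
  have B: "SS u x r = SS u x 0 * bessel_I0 (\<mu>*r)"
    by (rule bessel_iter[OF cont_SS[OF D pan cb] SS_KK[OF D pan cb] rr])
  have S0: "SS u x 0 = 2 * pi * u x" by (simp add: SS_def)
  have KKe: "KK r (SS u x) = 2 * pi * u x * (bessel_I0 (\<mu>*r) - 1) / \<mu>^2"
    using K B S0 mu by (simp add: field_simps)
  show ?thesis unfolding I KKe a_fun_def using r mu by (simp add: field_simps power2_eq_square)
qed

end
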